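(* There exist a transition system $\mathcal T$, an information source $\sigma_h$, and a dynamic heuristic $h$ over $\sigma_h$ that is dyn-admissible, dyn-consistent and dyn-monotonic (and whose information is only changed by update operations along transitions) such that some run of Dynamic A* with \texttt{reeval} set to false using $h$ reopens a state, i.e., removes a state from Closed. Moreover, in this run, omitting the reopening would cause the algorithm to return a suboptimal solution.
   Context: A transition system is $\mathcal T=\langle S,L,c,T,s_I,S_G\rangle$ with finite states $S$, finite labels $L$, cost function $c:L\to\mathbb R_{\ge0}$, transitions $T\subseteq S\times L\times S$, initial state $s_I$, goal states $S_G\subseteq S$; $h^*(s)$ is the minimal cost of a path from $s$ to a goal ($\infty$ if none). An information source $\sigma$ consists of a set $\mathcal I_\sigma$, $\iota_0^\sigma\in\mathcal I_\sigma$, $\mathrm{update}_\sigma:\mathcal I_\sigma\times T\to\mathcal I_\sigma$, $\mathrm{refine}_\sigma:\mathcal I_\sigma\times S\to\mathcal I_\sigma$. Reachable information: $\iota_n$ is reachable if obtained from $\iota_0^\sigma$ by a sequence of refine steps on states and update steps on transitions $e_1,\dots,e_n$, where each refined state and each origin of an updated transition is $s_I$ or the target of an earlier updated transition. A dynamic heuristic over $\sigma$ is $h:S\times\mathcal I_\sigma\to\mathbb R_{\ge0}\cup\{\infty\}$. It is dyn-admissible if $h(s,\iota)\le h^*(s)$; dyn-consistent if $h(s,\iota)\le c(\ell)+h(s',\iota)$ for all $\langle s,\ell,s'\rangle\in T$; each for all states and all reachable $\iota$; and dyn-monotonic if $h(s,\iota)\le h(s,\mathrm{update}_\sigma(\iota,t))$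 and $h(s,\iota)\le h(s,\mathrm{refine}_\sigma(\iota,s'))$ for all reachable $\iota$, all $s,s'\in S$, all $t\in T$. Parent source $\sigma_p$: $\mathcal I_{\sigma_p}$ = partial functions $S\rightharpoonup\mathbb R_{\ge0}\times(T\cup\{\bot\})$; $\iota_0=\{s_I\mapsto\langle0,\bot\rangle\}$; refine is the identity; $\mathrm{update}(\iota,\langle s,\ell,s'\rangle)$ with $\iota(s)=\langle g,\cdot\rangle$ changes only $s'$, setting it to $\langle g+c(\ell),\langle s,\ell,s'\rangle\rangle$ if $\iota(s')$ is undefined or has $g$-component $\ge g+c(\ell)$, otherwise unchanged. Dynamic A* takes $\mathcal T$, sources $\sigma_p,\sigma_h$, a dynamic heuristic $h$ over $\sigma_h$ and a Boolean flag \texttt{reeval}. Notation: at any moment $g(s)$ is the $g$-component of the current $\mathcal I(\sigma_p)(s)$ and $h(s)$ denotes $h(s,\mathcal I(\sigma_h))$ for the current $\mathcal I(\sigma_h)$. Open is a priority queue of entries $\langle s,g,h\rangle$ (duplicates allowed), popped by minimal stored value $g+h$ (ties arbitrary). Algorithm: 1. $\mathcal I(\sigma):=\iota_0^\sigma$ for both sources; $S_{\mathrm{known}}:=\{s_I\}$; Closed $:=\emptyset$; Open empty. If $h(s_I)<\infty$ insert $\langle s_I,g(s_I),h(s_I)\rangle$. 2. While Open is nonempty: pop an entry $\langle s,\hat g,\hat h\rangle$ of minimal $\hat g+\hat h$. If $s\in$ Closed, continue with the next iteration. Otherwise set $\mathcal I(\sigma):=\mathrm{refine}_\sigma(\mathcal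 I(\sigma),s)$ for both sources. If \texttt{reeval} is true and $\hat h<h(s)$: if $h(s)<\infty$ insert $\langle s,g(s),h(s)\rangle$; continue with the next iteration (this is a re-evaluation). Otherwise add $s$ to Closed ($s$ is expanded). If $s\in S_G$, return the path obtained by following the parent pointers of $\mathcal I(\sigma_p)$ from $s$ back to $s_I$. Otherwise, for each $t=\langle s,\ell,s'\rangle\in T$ in some order: let $old:=g(s')$ if $s'\in S_{\mathrm{known}}$ and undefined otherwise; set $\mathcal I(\sigma):=\mathrm{update}_\sigma(\mathcal I(\sigma),t)$ for both sources; add $s'$ to $S_{\mathrm{known}}$; if $h(s')=\infty$ skip $s'$; else if $old$ is undefined insert $\langle s',g(s'),h(s')\rangle$; else if $old>g(s')$, remove $s'$ from Closed if it is there (reopening) and insert $\langle s',g(s'),h(s')\rangle$. 3. Return "unsolvable". *)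

theory Defs
  imports Main "HOL-Library.Multiset" "HOL-Library.Extended_Nonnegative_Real"
begin

type_synonym ('s,'l) trans = "'s \<times> 'l \<times> 's"

record ('s,'l) tsys =
  St :: "'s set"
  Lb :: "'l set"
  cost :: "'l \<Rightarrow> real"
  Tr :: "('s,'l) trans set"
  sI :: 's
  SG :: "'s set"

definition wf_ts :: "('s,'l) tsys \<Rightarrow> bool" where
  "wf_ts T \<longleftrightarrow> finite (St T) \<and> finite (Lb T) \<and> (\<forall>l\<in>Lb T. cost T l \<ge> 0)
     \<and> Tr T \<subseteq> St T \<times> Lb T \<times> St T \<and> sI T \<in> St T \<and> SG T \<subseteq> St T"

inductive is_path :: "('s,'l) tsys \<Rightarrow> 's \<Rightarrow> ('s,'l) trans list \<Rightarrow> 's \<Rightarrow> bool"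
  for T where
  nil: "is_path T s [] s"
| cons: "(s,l,u) \<in> Tr T \<Longrightarrow> is_path T u ts s' \<Longrightarrow> is_path T s ((s,l,u) # ts) s'"

definition path_cost :: "('s,'l) tsys \<Rightarrow> ('s,'l) trans list \<Rightarrow> real" where
  "path_cost T ts = sum_list (map (\<lambda>(_,l,_). cost T l) ts)"

text \<open>h*(s): minimal cost of a path from s to a goal; infinity (Inf of empty set) if none.\<close>
definition hstar :: "('s,'l) tsys \<Rightarrow> 's \<Rightarrow> ennreal" where
  "hstar T s = (INF ts \<in> {ts. \<exists>s'. is_path T s ts s' \<and> s' \<in> SG T}. ennreal (path_cost T ts))"

record ('s,'l,'i) src =
  Info :: "'i set"
  iota0 :: 'i
  upd :: "'i \<Rightarrow> ('s,'l) trans \<Rightarrow> 'i"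
  refine :: "'i \<Rightarrow> 's \<Rightarrow> 'i"

definition wf_src :: "('s,'l) tsys \<Rightarrow> ('s,'l,'i) src \<Rightarrow> bool" where
  "wf_src T \<sigma> \<longleftrightarrow> iota0 \<sigma> \<in> Info \<sigma>
     \<and> (\<forall>\<iota>\<in>Info \<sigma>. \<forall>t\<in>Tr T. upd \<sigma> \<iota> t \<in> Info \<sigma>)
     \<and> (\<forall>\<iota>\<in>Info \<sigma>. \<forall>s\<in>St T. refine \<sigma> \<iota> s \<in> Info \<sigma>)"

text \<open>Reachable information: the set R records s_I and the targets of transitions updated so far.\<close>
inductive reach_aux :: "('s,'l) tsys \<Rightarrow> ('s,'l,'i) src \<Rightarrow> 'i \<Rightarrow> 's set \<Rightarrow> bool"
  for T \<sigma> where
  init: "reach_aux T \<sigma> (iota0 \<sigma>) {sI T}"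
| ref: "reach_aux T \<sigma> \<iota> R \<Longrightarrow> s \<in> R \<Longrightarrow> reach_aux T \<sigma> (refine \<sigma> \<iota> s) R"
| up: "reach_aux T \<sigma> \<iota> R \<Longrightarrow> (s,l,s') \<in> Tr T \<Longrightarrow> s \<in> R
        \<Longrightarrow> reach_aux T \<sigma> (upd \<sigma> \<iota> (s,l,s')) (insert s' R)"

definition reachable_info :: "('s,'l) tsys \<Rightarrow> ('s,'l,'i) src \<Rightarrow> 'i \<Rightarrow> bool" where
  "reachable_info T \<sigma> \<iota> \<longleftrightarrow> (\<exists>R. reach_aux T \<sigma> \<iota> R)"

definition dyn_admissible :: "('s,'l) tsys \<Rightarrow> ('s,'l,'i) src \<Rightarrow> ('s \<Rightarrow> 'i \<Rightarrow> ennreal) \<Rightarrow> bool" where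
  "dyn_admissible T \<sigma> h \<longleftrightarrow>
     (\<forall>\<iota> s. reachable_info T \<sigma> \<iota> \<longrightarrow> s \<in> St T \<longrightarrow> h s \<iota> \<le> hstar T s)"

definition dyn_consistent :: "('s,'l) tsys \<Rightarrow> ('s,'l,'i) src \<Rightarrow> ('s \<Rightarrow> 'i \<Rightarrow> ennreal) \<Rightarrow> bool" where
  "dyn_consistent T \<sigma> h \<longleftrightarrow>
     (\<forall>\<iota> s l s'. reachable_info T \<sigma> \<iota> \<longrightarrow> (s,l,s') \<in> Tr T \<longrightarrow> h s \<iota> \<le> ennreal (cost T l) + h s' \<iota>)"

definition dyn_monotonic :: "('s,'l) tsys \<Rightarrow> ('s,'l,'i) src \<Rightarrow> ('s \<Rightarrow> 'i \<Rightarrow> ennreal) \<Rightarrow> bool" where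
  "dyn_monotonic T \<sigma> h \<longleftrightarrow>
     (\<forall>\<iota>. reachable_info T \<sigma> \<iota> \<longrightarrow>
        (\<forall>s\<in>St T. (\<forall>t\<in>Tr T. h s \<iota> \<le> h s (upd \<sigma> \<iota> t))
                 \<and> (\<forall>s'\<in>St T. h s \<iota> \<le> h s (refine \<sigma> \<iota> s'))))"

type_synonym ('s,'l) pinfo = "'s \<Rightarrow> (real \<times> ('s,'l) trans option) option"

definition pupd :: "('s,'l) tsys \<Rightarrow> ('s,'l) pinfo \<Rightarrow> ('s,'l) trans \<Rightarrow> ('s,'l) pinfo" where
  "pupd T \<iota> t = (case t of (s,l,s') \<Rightarrow>
     (case \<iota> s of None \<Rightarrow> \<iota>
      | Some (g,_) \<Rightarrow>
          (case \<iota> s' of None \<Rightarrow> \<iota>(s' \<mapsto> (g + cost T l, Some t))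
           | Some (g',_) \<Rightarrow> if g' \<ge> g + cost T l then \<iota>(s' \<mapsto> (g + cost T l, Some t)) else \<iota>)))"

definition sigma_p :: "('s,'l) tsys \<Rightarrow> ('s,'l,('s,'l) pinfo) src" where
  "sigma_p T = \<lparr>Info = {\<iota>. dom \<iota> \<subseteq> St T \<and> (\<forall>s g p. \<iota> s = Some (g,p) \<longrightarrow> g \<ge> 0)},
                iota0 = [sI T \<mapsto> (0, None)], upd = pupd T, refine = (\<lambda>\<iota> s. \<iota>)\<rparr>"

definition gval :: "('s,'l) pinfo \<Rightarrow> 's \<Rightarrow> real" where
  "gval \<iota> s = fst (the (\<iota> s))"

inductive parent_path :: "('s,'l) tsys \<Rightarrow> ('s,'l) pinfo \<Rightarrow> 's \<Rightarrow> ('s,'l) trans list \<Rightarrow> bool"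
  for T \<iota> where
  base: "parent_path T \<iota> (sI T) []"
| step: "s' \<noteq> sI T \<Longrightarrow> \<iota> s' = Some (g, Some (s,l,s')) \<Longrightarrow> parent_path T \<iota> s ts
          \<Longrightarrow> parent_path T \<iota> s' (ts @ [(s,l,s')])"

datatype ('s,'l) status = Running | Solved "('s,'l) trans list" | Unsolvable

record ('s,'l,'i) cfg =
  pinf :: "('s,'l) pinfo"
  hinf :: 'i
  known :: "'s set"
  closed :: "'s set"
  opn :: "('s \<times> real \<times> ennreal) multiset"
  pending :: "('s,'l) trans set"  \<comment> \<open>successor transitions still to be processed, in arbitrary order\<close>
  status :: "('s,'l) status"

definition da_init :: "('s,'l) tsys \<Rightarrow> ('s,'l,'i) src \<Rightarrow> ('s \<Rightarrow> 'i \<Rightarrow> ennreal) \<Rightarrow> ('s,'l,'i) cfg" where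
  "da_init T \<sigma>h h = \<lparr>pinf = iota0 (sigma_p T), hinf = iota0 \<sigma>h, known = {sI T}, closed = {},
     opn = (if h (sI T) (iota0 \<sigma>h) < \<infinity> then {#(sI T, gval (iota0 (sigma_p T)) (sI T), h (sI T) (iota0 \<sigma>h))#} else {#}),
     pending = {}, status = Running\<rparr>"

definition is_min_entry :: "('s \<times> real \<times> ennreal) multiset \<Rightarrow> ('s \<times> real \<times> ennreal) \<Rightarrow> bool" where
  "is_min_entry M e \<longleftrightarrow> e \<in># M \<and>
     (\<forall>e'\<in>#M. ennreal (fst (snd e)) + snd (snd e) \<le> ennreal (fst (snd e')) + snd (snd e'))"

text \<open>The flag reopen = True is the algorithm as given; reopen = False is the variant that
  omits the reopening (removal from Closed); everything else is identical.\<close>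
inductive da_step :: "('s,'l) tsys \<Rightarrow> ('s,'l,'i) src \<Rightarrow> ('s \<Rightarrow> 'i \<Rightarrow> ennreal) \<Rightarrow> bool \<Rightarrow> bool
    \<Rightarrow> ('s,'l,'i) cfg \<Rightarrow> ('s,'l,'i) cfg \<Rightarrow> bool"
  for T \<sigma>h h reopen reeval where
  pop_closed:
    "status c = Running \<Longrightarrow> pending c = {} \<Longrightarrow> is_min_entry (opn c) (s, g0, h0) \<Longrightarrow> s \<in> closed c
     \<Longrightarrow> da_step T \<sigma>h h reopen reeval c (c\<lparr>opn := opn c - {#(s, g0, h0)#}\<rparr>)"
| pop_reeval:
    "status c = Running \<Longrightarrow> pending c = {} \<Longrightarrow> is_min_entry (opn c) (s, g0, h0) \<Longrightarrow> s \<notin> closed c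
     \<Longrightarrow> p' = refine (sigma_p T) (pinf c) s \<Longrightarrow> \<iota>' = refine \<sigma>h (hinf c) s
     \<Longrightarrow> reeval \<Longrightarrow> h0 < h s \<iota>'
     \<Longrightarrow> da_step T \<sigma>h h reopen reeval c
           (c\<lparr>pinf := p', hinf := \<iota>',
              opn := opn c - {#(s, g0, h0)#} + (if h s \<iota>' < \<infinity> then {#(s, gval p' s, h s \<iota>')#} else {#})\<rparr>)"
| pop_goal:
    "status c = Running \<Longrightarrow> pending c = {} \<Longrightarrow> is_min_entry (opn c) (s, g0, h0) \<Longrightarrow> s \<notin> closed c
     \<Longrightarrow> p' = refine (sigma_p T) (pinf c) s \<Longrightarrow> \<iota>' = refine \<sigma>h (hinf c) s
     \<Longrightarrow> \<not> (reeval \<and> h0 < h s \<iota>') \<Longrightarrow> s \<in> SG T \<Longrightarrow> parent_path T p' s ts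
     \<Longrightarrow> da_step T \<sigma>h h reopen reeval c
           (c\<lparr>pinf := p', hinf := \<iota>', opn := opn c - {#(s, g0, h0)#},
              closed := insert s (closed c), status := Solved ts\<rparr>)"
| pop_expand:
    "status c = Running \<Longrightarrow> pending c = {} \<Longrightarrow> is_min_entry (opn c) (s, g0, h0) \<Longrightarrow> s \<notin> closed c
     \<Longrightarrow> p' = refine (sigma_p T) (pinf c) s \<Longrightarrow> \<iota>' = refine \<sigma>h (hinf c) s
     \<Longrightarrow> \<not> (reeval \<and> h0 < h s \<iota>') \<Longrightarrow> s \<notin> SG T
     \<Longrightarrow> da_step T \<sigma>h h reopen reeval c
           (c\<lparr>pinf := p', hinf := \<iota>', opn := opn c - {#(s, g0, h0)#},
              closed := insert s (closed c), pending := {t \<in> Tr T. fst t = s}\<rparr>)"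
| exhausted:
    "status c = Running \<Longrightarrow> pending c = {} \<Longrightarrow> opn c = {#}
     \<Longrightarrow> da_step T \<sigma>h h reopen reeval c (c\<lparr>status := Unsolvable\<rparr>)"
| successor:
    "status c = Running \<Longrightarrow> (s, l, s') \<in> pending c
     \<Longrightarrow> p' = upd (sigma_p T) (pinf c) (s, l, s') \<Longrightarrow> \<iota>' = upd \<sigma>h (hinf c) (s, l, s')
     \<Longrightarrow> improved = (s' \<in> known c \<and> h s' \<iota>' \<noteq> \<infinity> \<and> gval (pinf c) s' > gval p' s')
     \<Longrightarrow> ins = (h s' \<iota>' \<noteq> \<infinity> \<and> (s' \<notin> known c \<or> improved))
     \<Longrightarrow> da_step T \<sigma>h h reopen reeval c
           (c\<lparr>pinf := p', hinf := \<iota>', known := insert s' (known c),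
              pending := pending c - {(s, l, s')},
              closed := (if improved \<and> reopen then closed c - {s'} else closed c),
              opn := opn c + (if ins then {#(s', gval p' s', h s' \<iota>')#} else {#})\<rparr>)"

end

theory Submission
  imports Defs
begin

definition TT :: "(nat,nat) tsys" where
  "TT = \<lparr>St = {0,1,2,3,4}, Lb = {1,3,10}, cost = real,
         Tr = {(0,3,2),(0,1,1),(0,3,4),(1,1,2),(2,10,3),(4,10,3)}, sI = 0, SG = {3}\<rparr>"

definition SH :: "(nat,nat,(nat\<times>nat\<times>nat) list) src" where
  "SH = \<lparr>Info = UNIV, iota0 = [], upd = (\<lambda>\<iota> t. t # \<iota>), refine = (\<lambda>\<iota> s. \<iota>)\<rparr>"

definition HR :: "nat \<Rightarrow> real" where
  "HR s = (if s = 0 then 12 else if s = 1 then 11 else if s = 2 then 10 else if s = 4 then 10 else 0)"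

definition HH :: "nat \<Rightarrow> (nat\<times>nat\<times>nat) list \<Rightarrow> ennreal" where
  "HH s \<iota> = (if (0,1,1) \<in> set \<iota> then ennreal (HR s) else 0)"

lemma HH_simps:
  "HH s \<iota> = (if (0,1,1) \<in> set \<iota> then (if s = 0 then 12 else if s = 1 then 11 else if s = 2 then 10 else if s = 4 then 10 else 0) else 0)"
  by (simp add: HH_def HR_def)

lemma HR_cons: "(s,l,u) \<in> Tr TT \<Longrightarrow> HR s \<le> cost TT l + HR u"
  by (auto simp: TT_def HR_def)

lemma path_lb: "is_path TT s ts s' \<Longrightarrow> s' \<in> SG TT \<Longrightarrow> HR s \<le> path_cost TT ts"
proof (induction rule: is_path.induct)
  case (nil s) then show ?case by (simp add: TT_def HR_def path_cost_def)
next
  case (cons s l u ts s')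
  then have "HR u \<le> path_cost TT ts" by simp
  moreover have "HR s \<le> cost TT l + HR u" using HR_cons cons.hyps(1) .
  ultimately show ?case by (simp add: path_cost_def)
qed

lemma hstar_lb: "ennreal (HR s) \<le> hstar TT s"
  unfolding hstar_def
proof (rule INF_greatest)
  fix ts assume "ts \<in> {ts. \<exists>s'. is_path TT s ts s' \<and> s' \<in> SG TT}"
  then obtain s' where "is_path TT s ts s'" "s' \<in> SG TT" by auto
  then show "ennreal (HR s) \<le> ennreal (path_cost TT ts)"
    using path_lb ennreal_leI by blast
qed

lemma hstar0: "hstar TT 0 \<le> 12"
proof -
  have p: "is_path TT 0 [(0,1,1),(1,1,2),(2,10,3)] 3"
    by (auto simp: TT_def intro!: is_path.intros)
  have "hstar TT 0 \<le> ennreal (path_cost TT [(0,1,1),(1,1,2),(2,10,3)])"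
    unfolding hstar_def by (rule INF_lower) (use p in \<open>auto simp: TT_def\<close>)
  also have "\<dots> = 12" by (simp add: path_cost_def TT_def)
  finally show ?thesis .
qed

lemma wf: "wf_ts TT" "wf_src TT SH"
  by (auto simp: wf_ts_def TT_def wf_src_def SH_def)

lemma adm: "dyn_admissible TT SH HH"
  unfolding dyn_admissible_def HH_def using hstar_lb by auto

lemma cons: "dyn_consistent TT SH HH"
  unfolding dyn_consistent_def
proof (intro allI impI)
  fix \<iota> s l s' assume t: "(s,l,s') \<in> Tr TT"
  show "HH s \<iota> \<le> ennreal (cost TT l) + HH s' \<iota>"
  proof (cases "(0,1,1) \<in> set \<iota>")
    case True
    have "HR s \<le> cost TT l + HR s'" using HR_cons[OF t] .
    moreover have "cost TT l \<ge> 0" "HR s' \<ge> 0" using t by (auto simp: TT_def HR_def)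
    ultimately show ?thesis using True by (simp add: HH_def ennreal_plus[symmetric] del: ennreal_plus)
  next
    case False then show ?thesis by (simp add: HH_def)
  qed
qed

lemma mono: "dyn_monotonic TT SH HH"
  unfolding dyn_monotonic_def by (auto simp: HH_def SH_def)


type_synonym C = "(nat,nat,(nat\<times>nat\<times>nat) list) cfg"

definition P0 :: "(nat,nat) pinfo" where "P0 = [0 \<mapsto> (0::real, None)]"
definition "P1 = P0(2 \<mapsto> (3, Some (0,3,2)))"
definition "P2 = P1(4 \<mapsto> (3, Some (0,3,4)))"
definition "P3 = P2(1 \<mapsto> (1, Some (0,1,1)))"
definition "P4 = P3(3 \<mapsto> (13, Some (2,10,3)))"
definition "P5 = P4(3 \<mapsto> (13, Some (4,10,3)))"
definition "P6 = P5(2 \<mapsto> (2, Some (1,1,2)))"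

definition K1 :: C where "K1 = \<lparr>pinf = P0, hinf = [], known = {0}, closed = {0}, opn = {#},
  pending = {(0,3,2),(0,1,1),(0,3,4)}, status = Running\<rparr>"
definition K2 :: C where "K2 = \<lparr>pinf = P1, hinf = [(0,3,2)], known = {0,2}, closed = {0}, opn = {#(2,3,0)#},
  pending = {(0,1,1),(0,3,4)}, status = Running\<rparr>"
definition K3 :: C where "K3 = \<lparr>pinf = P2, hinf = [(0,3,4),(0,3,2)], known = {0,2,4}, closed = {0}, opn = {#(4,3,0),(2,3,0)#},
  pending = {(0,1,1)}, status = Running\<rparr>"
definition K4 :: C where "K4 = \<lparr>pinf = P3, hinf = [(0,1,1),(0,3,4),(0,3,2)], known = {0,1,2,4}, closed = {0},
  opn = {#(1,1,11),(4,3,0),(2,3,0)#}, pending = {}, status = Running\<rparr>"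
definition K5 :: C where "K5 = \<lparr>pinf = P3, hinf = [(0,1,1),(0,3,4),(0,3,2)], known = {0,1,2,4}, closed = {0,2},
  opn = {#(1,1,11),(4,3,0)#}, pending = {(2,10,3)}, status = Running\<rparr>"
definition K6 :: C where "K6 = \<lparr>pinf = P4, hinf = [(2,10,3),(0,1,1),(0,3,4),(0,3,2)], known = {0,1,2,3,4}, closed = {0,2},
  opn = {#(3,13,0),(1,1,11),(4,3,0)#}, pending = {}, status = Running\<rparr>"
definition K7 :: C where "K7 = \<lparr>pinf = P4, hinf = [(2,10,3),(0,1,1),(0,3,4),(0,3,2)], known = {0,1,2,3,4}, closed = {0,2,4},
  opn = {#(3,13,0),(1,1,11)#}, pending = {(4,10,3)}, status = Running\<rparr>"
definition K8 :: C where "K8 = \<lparr>pinf = P5, hinf = [(4,10,3),(2,10,3),(0,1,1),(0,3,4),(0,3,2)], known = {0,1,2,3,4}, closed = {0,2,4},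
  opn = {#(3,13,0),(1,1,11)#}, pending = {}, status = Running\<rparr>"
definition K9 :: C where "K9 = \<lparr>pinf = P5, hinf = [(4,10,3),(2,10,3),(0,1,1),(0,3,4),(0,3,2)], known = {0,1,2,3,4}, closed = {0,1,2,4},
  opn = {#(3,13,0)#}, pending = {(1,1,2)}, status = Running\<rparr>"
definition K10 :: C where "K10 = \<lparr>pinf = P6, hinf = [(1,1,2),(4,10,3),(2,10,3),(0,1,1),(0,3,4),(0,3,2)], known = {0,1,2,3,4}, closed = {0,1,4},
  opn = {#(2,2,10),(3,13,0)#}, pending = {}, status = Running\<rparr>"
definition K11 :: C where "K11 = K10\<lparr>closed := {0,1,2,4}, opn := {#(3,13,0)#}\<rparr>"

lemma stepI: "da_step T s h r e c c' \<Longrightarrow> c' = c'' \<Longrightarrow> da_step T s h r e c c''" by simp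

lemmas defs = TT_def SH_def HH_simps P0_def P1_def P2_def P3_def P4_def P5_def P6_def
  K1_def K2_def K3_def K4_def K5_def K6_def K7_def K8_def K9_def K10_def K11_def
  da_init_def sigma_p_def is_min_entry_def gval_def pupd_def

abbreviation "R \<equiv> (\<lambda>a b. da_step TT SH HH True False a b \<and> closed a \<subseteq> closed b)"

lemma s1: "R (da_init TT SH HH) K1"
  apply (rule conjI)
   apply (rule stepI[OF da_step.pop_expand[where s=0 and ?g0.0=0 and ?h0.0=0, OF _ _ _ _ refl refl]])
  by (auto simp: defs)

lemma s2: "R K1 K2"
  apply (rule conjI)
   apply (rule stepI[OF da_step.successor[where s=0 and l=3 and s'=2, OF _ _ refl refl refl refl]])
  by (auto simp: defs)

lemma s3: "R K2 K3"
  apply (rule conjI)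
   apply (rule stepI[OF da_step.successor[where s=0 and l=3 and s'=4, OF _ _ refl refl refl refl]])
  by (auto simp: defs)

lemma s4: "R K3 K4"
  apply (rule conjI)
   apply (rule stepI[OF da_step.successor[where s=0 and l=1 and s'=1, OF _ _ refl refl refl refl]])
  by (auto simp: defs)

lemma s5: "R K4 K5"
  apply (rule conjI)
   apply (rule stepI[OF da_step.pop_expand[where s=2 and ?g0.0=3 and ?h0.0=0, OF _ _ _ _ refl refl]])
  by (auto simp: defs)

lemma s6: "R K5 K6"
  apply (rule conjI)
   apply (rule stepI[OF da_step.successor[where s=2 and l=10 and s'=3, OF _ _ refl refl refl refl]])
  by (auto simp: defs)

lemma s7: "R K6 K7"
  apply (rule conjI)
   apply (rule stepI[OF da_step.pop_expand[where s=4 and ?g0.0=3 and ?h0.0=0, OF _ _ _ _ refl refl]])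
  by (auto simp: defs)

lemma s8: "R K7 K8"
  apply (rule conjI)
   apply (rule stepI[OF da_step.successor[where s=4 and l=10 and s'=3, OF _ _ refl refl refl refl]])
  by (auto simp: defs)

lemma s9: "R K8 K9"
  apply (rule conjI)
   apply (rule stepI[OF da_step.pop_expand[where s=1 and ?g0.0=1 and ?h0.0=11, OF _ _ _ _ refl refl]])
  by (auto simp: defs)

lemma s10: "da_step TT SH HH True False K9 K10"
   apply (rule stepI[OF da_step.successor[where s=1 and l=1 and s'=2, OF _ _ refl refl refl refl]])
  by (auto simp: defs)

lemma s10': "da_step TT SH HH False False K9 (K10\<lparr>closed := {0,1,2,4}\<rparr>)"
   apply (rule stepI[OF da_step.successor[where s=1 and l=1 and s'=2, OF _ _ refl refl refl refl]])
  by (auto simp: defs)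

lemma pp: "parent_path TT P6 3 ts \<Longrightarrow> ts = [(0,3,4),(4,10,3)]"
  apply (erule parent_path.cases)
   apply (simp add: TT_def)
  apply (simp add: defs)
  apply clarify
  apply (erule parent_path.cases)
   apply (simp add: TT_def)
  apply (simp add: defs)
  apply clarify
  apply (erule parent_path.cases)
   apply (simp add: TT_def)
  apply (simp add: defs)
  done

definition Inv :: "C \<Rightarrow> bool" where
  "Inv x \<longleftrightarrow> x = K10\<lparr>closed := {0,1,2,4}\<rparr> \<or> x = K11 \<or>
     (status x \<noteq> Running \<and> (\<forall>ts. status x = Solved ts \<longrightarrow> ts = [(0,3,4),(4,10,3)]))"



lemma from10: "da_step TT SH HH False False (K10\<lparr>closed := {0,1,2,4}\<rparr>) y \<Longrightarrow> y = K11"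
  apply (erule da_step.cases)
       apply (auto simp: K10_def K11_def is_min_entry_def TT_def sigma_p_def SH_def)
  done

lemma from11: "da_step TT SH HH False False K11 y \<Longrightarrow> status y \<noteq> Running \<and> (\<forall>ts. status y = Solved ts \<longrightarrow> ts = [(0,3,4),(4,10,3)])"
  apply (erule da_step.cases)
       apply (auto simp: K10_def K11_def is_min_entry_def TT_def sigma_p_def SH_def intro: pp[unfolded TT_def])
  done

lemma fromdone: "da_step T s h r e x y \<Longrightarrow> status x = Running"
  by (erule da_step.cases) auto

lemma inv_step: "da_step TT SH HH False False x y \<Longrightarrow> Inv x \<Longrightarrow> Inv y"
  unfolding Inv_def
  using from10 from11 fromdone by blast

lemma inv_rt: "(da_step TT SH HH False False)\<^sup>*\<^sup>* a b \<Longrightarrow> Inv a \<Longrightarrow> Inv b"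
  by (induction rule: rtranclp_induct) (auto intro: inv_step)

lemma pp_ex: "parent_path TT P6 3 [(0,3,4),(4,10,3)]"
proof -
  have b: "parent_path TT P6 0 []" using parent_path.base[of TT P6] by (simp add: TT_def)
  have "parent_path TT P6 4 ([] @ [(0,3,4)])"
    by (rule parent_path.step[OF _ _ b, where g=3]) (simp_all add: TT_def P6_def P5_def P4_def P3_def P2_def)
  then have "parent_path TT P6 3 ([(0,3,4)] @ [(4,10,3)])"
    by (intro parent_path.step[where g=13]) (simp_all add: TT_def P6_def P5_def)
  then show ?thesis by simp
qed

lemma s12: "\<exists>c2. da_step TT SH HH False False K11 c2 \<and> status c2 = Solved [(0,3,4),(4,10,3)]"
  apply (rule exI, rule conjI)
   apply (rule da_step.pop_goal[where s=3 and ?g0.0=13 and ?h0.0=0 and ts="[(0,3,4),(4,10,3)]", OF _ _ _ _ refl refl])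
         apply (simp_all add: K11_def K10_def is_min_entry_def TT_def sigma_p_def SH_def)
  using pp_ex by (simp add: TT_def)

theorem mainTheorem14:
  shows "\<exists>(T :: (nat, nat) tsys) (\<sigma>h :: (nat, nat, (nat \<times> nat \<times> nat) list) src)
           (h :: nat \<Rightarrow> (nat \<times> nat \<times> nat) list \<Rightarrow> ennreal).
     wf_ts T \<and> wf_src T \<sigma>h \<and> (\<forall>\<iota> s. refine \<sigma>h \<iota> s = \<iota>) \<and>
     dyn_admissible T \<sigma>h h \<and> dyn_consistent T \<sigma>h h \<and> dyn_monotonic T \<sigma>h h \<and>
     (\<exists>c c1.
        (\<lambda>a b. da_step T \<sigma>h h True False a b \<and> closed a \<subseteq> closed b)\<^sup>*\<^sup>* (da_init T \<sigma>h h) c \<and>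
        da_step T \<sigma>h h True False c c1 \<and> \<not> closed c \<subseteq> closed c1 \<and>
        da_step T \<sigma>h h False False c (c1\<lparr>closed := closed c\<rparr>) \<and>
        (\<exists>c2 ts. (da_step T \<sigma>h h False False)\<^sup>*\<^sup>* (c1\<lparr>closed := closed c\<rparr>) c2 \<and> status c2 = Solved ts) \<and>
        (\<forall>c2 ts. (da_step T \<sigma>h h False False)\<^sup>*\<^sup>* (c1\<lparr>closed := closed c\<rparr>) c2 \<and> status c2 = Solved ts
           \<longrightarrow> hstar T (sI T) < ennreal (path_cost T ts)))"
proof -
  have f0: "\<forall>\<iota> s. refine SH \<iota> s = \<iota>" by (simp add: SH_def)
  have cl: "closed K9 = {0,1,2,4}" by (simp add: K9_def)
  have f1: "R\<^sup>*\<^sup>* (da_init TT SH HH) K9"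
    apply (rule converse_rtranclp_into_rtranclp, rule s1)
    apply (rule converse_rtranclp_into_rtranclp, rule s2)
    apply (rule converse_rtranclp_into_rtranclp, rule s3)
    apply (rule converse_rtranclp_into_rtranclp, rule s4)
    apply (rule converse_rtranclp_into_rtranclp, rule s5)
    apply (rule converse_rtranclp_into_rtranclp, rule s6)
    apply (rule converse_rtranclp_into_rtranclp, rule s7)
    apply (rule converse_rtranclp_into_rtranclp, rule s8)
    apply (rule converse_rtranclp_into_rtranclp, rule s9)
    by (rule rtranclp.rtrancl_refl)
  have f2: "da_step TT SH HH True False K9 K10" by (rule s10)
  have f3: "\<not> closed K9 \<subseteq> closed K10" by (simp add: K9_def K10_def)
  have f4: "da_step TT SH HH False False K9 (K10\<lparr>closed := closed K9\<rparr>)" using s10' cl by simp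
  have st: "da_step TT SH HH False False (K10\<lparr>closed := closed K9\<rparr>) K11"
    unfolding cl by (rule stepI[OF da_step.pop_closed[where s=2 and ?g0.0=2 and ?h0.0=10]])
      (auto simp: K10_def K11_def is_min_entry_def)
  obtain c2 where c2: "da_step TT SH HH False False K11 c2" "status c2 = Solved [(0,3,4),(4,10,3)]"
    using s12 by blast
  have f5: "\<exists>c2 ts. (da_step TT SH HH False False)\<^sup>*\<^sup>* (K10\<lparr>closed := closed K9\<rparr>) c2 \<and> status c2 = Solved ts"
    using st c2 by (meson rtranclp.rtrancl_refl rtranclp.rtrancl_into_rtrancl)
  have f6: "\<forall>c2 ts. (da_step TT SH HH False False)\<^sup>*\<^sup>* (K10\<lparr>closed := closed K9\<rparr>) c2 \<and> status c2 = Solved ts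
           \<longrightarrow> hstar TT (sI TT) < ennreal (path_cost TT ts)"
  proof (intro allI impI, elim conjE)
    fix c2 ts assume r: "(da_step TT SH HH False False)\<^sup>*\<^sup>* (K10\<lparr>closed := closed K9\<rparr>) c2"
      and so: "status c2 = Solved ts"
    have "Inv (K10\<lparr>closed := closed K9\<rparr>)" unfolding cl Inv_def by simp
    with r have "Inv c2" by (rule inv_rt)
    then have "ts = [(0,3,4),(4,10,3)]" using so by (auto simp: Inv_def K10_def K11_def)
    have "path_cost TT ts = 13"
      using \<open>ts = _\<close> by (simp add: path_cost_def TT_def)
    have "sI TT = 0" by (simp add: TT_def)
    show "hstar TT (sI TT) < ennreal (path_cost TT ts)"
    proof -
      have "(12::ennreal) < ennreal 13" by simp
      with hstar0 have "hstar TT 0 < ennreal 13" by (rule le_less_trans)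
      then show ?thesis using \<open>path_cost TT ts = 13\<close> \<open>sI TT = 0\<close> by simp
    qed
  qed
  show ?thesis
    apply (rule exI[of _ TT], rule exI[of _ SH], rule exI[of _ HH])
    apply (intro conjI wf adm cons mono f0)
    apply (rule exI[of _ K9], rule exI[of _ K10])
    apply (intro conjI f1 f2 f3 f4 f5 f6)
    done
qed
end
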